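(* For every finite graph $G$ and every integer $i\geq1$, $$\mathrm{lw}_i(G)=\min_{(P^1,\mathcal{Z}^1),\ldots,(P^i,\mathcal{Z}^i)}\ \max\Big\{\Big|\bigcap_{j=1}^i Z^j_{u_j}\Big| : u_j\in V(P^j)\text{ for } j=1,\ldots,i\Big\},$$ where the minimum ranges over all $i$-tuples of path decompositions $(P^j,\mathcal{Z}^j)$, $\mathcal{Z}^j=(Z^j_u)_{u\in V(P^j)}$, of $G$.
   Context: All graphs are finite, simple and undirected. A path decomposition of $G$ is a pair $(P,\mathcal{Z})$ with $P$ a path and $\mathcal{Z}=(Z_u)_{u\in V(P)}$ subsets of $V(G)$ such that every edge of $G$ lies in some $Z_u$ and for every $v\in V(G)$ the set $\{u: v\in Z_u\}$ is non-empty and induces a connected subpath of $P$. For vertices $u,v$ of a connected graph, the interval $I(u,v)$ is the set of vertices lying on some shortest $(u,v)$-path. A set $S$ of vertices is (geodesically) convex if $I(u,v)\subseteq S$ for all $u,v\in S$. A graph $M$ is median if it is connected and for any three vertices $u,v,w$ we have $|I(u,v)\cap I(v,w)\cap I(w,u)|=1$. A median decomposition of a graph $G$ is a pair $(M,\mathcal{X})$ where $M$ is a median graph and $\mathcal{X}=(X_a)_{a\in V(M)}$ is a family of subsets of $V(G)$ (bags) such that (M1) for every edge $uv\in E(G)$ there is $a\in V(M)$ with $u,v\in X_a$, and (M2) for every $v\in V(G)$ the set $\{a\in V(M): v\in X_a\}$ is non-empty and convex in $M$. Its width is $\max_{a\in V(M)}|X_a|$. A $k$-lattice is a Cartesian product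 of $k$ (finite) paths. The lattice dimension of a graph $M$ is the least $k$ such that $M$ admits an isometric (distance-preserving) embedding into a $k$-lattice. For $i\geq1$, an $i$-lattice decomposition of $G$ is a median decomposition $(M,\mathcal{X})$ of $G$ with $M$ of lattice dimension at most $i$, and the $i$-latticewidth $\mathrm{lw}_i(G)$ is the minimum width of an $i$-lattice decomposition of $G$. *)

theory Defs
  imports Main
begin

definition graph :: "'a set \<Rightarrow> 'a set set \<Rightarrow> bool" where
  "graph V E \<longleftrightarrow> finite V \<and> (\<forall>e\<in>E. \<exists>x y. x \<noteq> y \<and> x \<in> V \<and> y \<in> V \<and> e = {x, y})"

definition walk :: "'a set \<Rightarrow> 'a set set \<Rightarrow> 'a list \<Rightarrow> bool" where
  "walk V E xs \<longleftrightarrow> xs \<noteq> [] \<and> set xs \<subseteq> V \<and>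
     (\<forall>k. Suc k < length xs \<longrightarrow> {xs ! k, xs ! Suc k} \<in> E)"

definition connected_graph :: "'a set \<Rightarrow> 'a set set \<Rightarrow> bool" where
  "connected_graph V E \<longleftrightarrow> V \<noteq> {} \<and>
     (\<forall>u\<in>V. \<forall>v\<in>V. \<exists>xs. walk V E xs \<and> hd xs = u \<and> last xs = v)"

definition gdist :: "'a set \<Rightarrow> 'a set set \<Rightarrow> 'a \<Rightarrow> 'a \<Rightarrow> nat" where
  "gdist V E u v = (LEAST n. \<exists>xs. walk V E xs \<and> hd xs = u \<and> last xs = v \<and> length xs = Suc n)"

definition interval :: "'a set \<Rightarrow> 'a set set \<Rightarrow> 'a \<Rightarrow> 'a \<Rightarrow> 'a set" where
  "interval V E u v = {w. \<exists>xs. walk V E xs \<and> hd xs = u \<and> last xs = v \<and>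
       length xs = Suc (gdist V E u v) \<and> w \<in> set xs}"

definition convex :: "'a set \<Rightarrow> 'a set set \<Rightarrow> 'a set \<Rightarrow> bool" where
  "convex V E S \<longleftrightarrow> S \<subseteq> V \<and> (\<forall>u\<in>S. \<forall>v\<in>S. interval V E u v \<subseteq> S)"

definition median_graph :: "'a set \<Rightarrow> 'a set set \<Rightarrow> bool" where
  "median_graph V E \<longleftrightarrow> graph V E \<and> connected_graph V E \<and>
     (\<forall>u\<in>V. \<forall>v\<in>V. \<forall>w\<in>V.
        card (interval V E u v \<inter> interval V E v w \<inter> interval V E w u) = 1)"

definition path_V :: "nat \<Rightarrow> nat set" where
  "path_V n = {0..<n}"

definition path_E :: "nat \<Rightarrow> nat set set" where
  "path_E n = {{k, Suc k} | k. Suc k < n}"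

definition path_decomp :: "'a set \<Rightarrow> 'a set set \<Rightarrow> nat \<Rightarrow> (nat \<Rightarrow> 'a set) \<Rightarrow> bool" where
  "path_decomp V E n Z \<longleftrightarrow> n \<ge> 1 \<and> (\<forall>u\<in>path_V n. Z u \<subseteq> V) \<and>
     (\<forall>e\<in>E. \<exists>u\<in>path_V n. e \<subseteq> Z u) \<and>
     (\<forall>v\<in>V. connected_graph {u\<in>path_V n. v \<in> Z u} {e\<in>path_E n. e \<subseteq> {u\<in>path_V n. v \<in> Z u}})"

definition median_decomp ::
  "'a set \<Rightarrow> 'a set set \<Rightarrow> 'b set \<Rightarrow> 'b set set \<Rightarrow> ('b \<Rightarrow> 'a set) \<Rightarrow> bool" where
  "median_decomp V E VM EM X \<longleftrightarrow> median_graph VM EM \<and> (\<forall>a\<in>VM. X a \<subseteq> V) \<and>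
     (\<forall>e\<in>E. \<exists>a\<in>VM. e \<subseteq> X a) \<and>
     (\<forall>v\<in>V. {a\<in>VM. v \<in> X a} \<noteq> {} \<and> convex VM EM {a\<in>VM. v \<in> X a})"

definition width :: "'b set \<Rightarrow> ('b \<Rightarrow> 'a set) \<Rightarrow> nat" where
  "width VM X = Max ((\<lambda>a. card (X a)) ` VM)"

text \<open>The k-lattice P_{ns!0} x ... x P_{ns!(k-1)} (k = length ns), vertices as coordinate lists.\<close>
definition lattice_V :: "nat list \<Rightarrow> nat list set" where
  "lattice_V ns = {xs. length xs = length ns \<and> (\<forall>j<length ns. xs ! j < ns ! j)}"

definition lattice_E :: "nat list \<Rightarrow> nat list set set" where
  "lattice_E ns = {{xs, ys} | xs ys. xs \<in> lattice_V ns \<and> ys \<in> lattice_V ns \<and>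
     (\<exists>j<length ns. Suc (xs ! j) = ys ! j \<and> (\<forall>l<length ns. l \<noteq> j \<longrightarrow> xs ! l = ys ! l))}"

definition isometric_embedding ::
  "'b set \<Rightarrow> 'b set set \<Rightarrow> 'c set \<Rightarrow> 'c set set \<Rightarrow> ('b \<Rightarrow> 'c) \<Rightarrow> bool" where
  "isometric_embedding V E V' E' f \<longleftrightarrow> f ` V \<subseteq> V' \<and>
     (\<forall>x\<in>V. \<forall>y\<in>V. gdist V' E' (f x) (f y) = gdist V E x y)"

text \<open>Lattice dimension at most k: isometric embedding into some k'-lattice with k' <= k
  (equivalently, the least such k' is at most k).\<close>
definition lattice_dim_le :: "'b set \<Rightarrow> 'b set set \<Rightarrow> nat \<Rightarrow> bool" where
  "lattice_dim_le V E k \<longleftrightarrow> (\<exists>ns f. length ns \<le> k \<and> (\<forall>j<length ns. ns ! j \<ge> 1) \<and>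
      isometric_embedding V E (lattice_V ns) (lattice_E ns) f)"

text \<open>i-latticewidth. Median graphs are finite, so their vertices are w.l.o.g. natural numbers.\<close>
definition latticewidth :: "nat \<Rightarrow> 'a set \<Rightarrow> 'a set set \<Rightarrow> nat" where
  "latticewidth i V E = (LEAST w. \<exists>(VM :: nat set) EM X.
      median_decomp V E VM EM X \<and> lattice_dim_le VM EM i \<and> width VM X = w)"

end

theory Submission
  imports Defs
begin

lemma walk_single[simp]: "walk V E [x] \<longleftrightarrow> x \<in> V"
  by (simp add: walk_def)

lemma walk_Cons2: "walk V E (x # y # xs) \<longleftrightarrow> x \<in> V \<and> {x,y} \<in> E \<and> walk V E (y # xs)"
proof
  assume h: "walk V E (x # y # xs)"
  have "{x,y} \<in> E" using h unfolding walk_def by (force dest: spec[of _ 0])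
  moreover have "walk V E (y # xs)" using h unfolding walk_def
    by auto
  ultimately show "x \<in> V \<and> {x,y} \<in> E \<and> walk V E (y # xs)" using h by (simp add: walk_def)
next
  assume h: "x \<in> V \<and> {x,y} \<in> E \<and> walk V E (y # xs)"
  show "walk V E (x # y # xs)" unfolding walk_def
  proof (intro conjI allI impI)
    show "set (x # y # xs) \<subseteq> V" using h by (auto simp: walk_def)
  next
    fix k assume "Suc k < length (x # y # xs)"
    then show "{(x # y # xs) ! k, (x # y # xs) ! Suc k} \<in> E" using h
      by (cases k) (auto simp: walk_def)
  qed simp
qed

lemma walk_hd_in: "walk V E xs \<Longrightarrow> hd xs \<in> V"
  by (auto simp: walk_def)
lemma walk_last_in: "walk V E xs \<Longrightarrow> last xs \<in> V"
  by (auto simp: walk_def)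
lemma walk_set: "walk V E xs \<Longrightarrow> set xs \<subseteq> V"
  by (auto simp: walk_def)

lemma walk_append:
  "walk V E xs \<Longrightarrow> walk V E ys \<Longrightarrow> last xs = hd ys \<Longrightarrow> walk V E (xs @ tl ys)"
proof (induction xs)
  case Nil then show ?case by (simp add: walk_def)
next
  case (Cons x xs)
  show ?case
  proof (cases xs)
    case Nil
    then show ?thesis using Cons.prems by (cases ys) (auto simp: walk_def)
  next
    case (Cons x' rest)
    have w: "walk V E xs" using Cons.prems(1) \<open>xs = x' # rest\<close> by (simp add: walk_Cons2)
    have "walk V E (xs @ tl ys)" using Cons.IH[OF w Cons.prems(2)] Cons.prems(3) \<open>xs = x' # rest\<close> by simp
    then show ?thesis using Cons.prems(1) \<open>xs = x' # rest\<close> by (simp add: walk_Cons2)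
  qed
qed

lemma walk_rev: "walk V E xs \<Longrightarrow> walk V E (rev xs)"
proof (induction xs)
  case Nil then show ?case by (simp add: walk_def)
next
  case (Cons x xs)
  show ?case
  proof (cases xs)
    case Nil then show ?thesis using Cons by simp
  next
    case (Cons x' rest)
    have w: "walk V E xs" and e: "{x,x'} \<in> E" and xv: "x \<in> V"
      using Cons.prems \<open>xs = x' # rest\<close> by (auto simp: walk_Cons2)
    have w2: "walk V E [x', x]" using e xv w \<open>xs = x' # rest\<close>
      by (auto simp: walk_Cons2 insert_commute walk_def)
    have "walk V E (rev xs @ tl [x', x])"
      by (rule walk_append[OF Cons.IH[OF w] w2]) (simp add: \<open>xs = x' # rest\<close>)
    then show ?thesis by simp
  qed
qed

lemma walk_take: "walk V E xs \<Longrightarrow> k < length xs \<Longrightarrow> walk V E (take (Suc k) xs)"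
  unfolding walk_def by (auto dest: in_set_takeD)

lemma walk_drop: "walk V E xs \<Longrightarrow> k < length xs \<Longrightarrow> walk V E (drop k xs)"
  unfolding walk_def by (auto dest: in_set_dropD)



lemma gdist_le:
  assumes "walk V E xs" "hd xs = u" "last xs = v"
  shows "gdist V E u v < length xs"
proof -
  have ne: "xs \<noteq> []" using assms(1) by (simp add: walk_def)
  have "gdist V E u v \<le> length xs - 1" unfolding gdist_def
    by (rule Least_le) (use assms ne in auto)
  then show ?thesis using ne by (cases xs) auto
qed

lemma gdist_walk:
  assumes "connected_graph V E" "u \<in> V" "v \<in> V"
  shows "\<exists>xs. walk V E xs \<and> hd xs = u \<and> last xs = v \<and> length xs = Suc (gdist V E u v)"
proof -
  obtain ys where ys: "walk V E ys" "hd ys = u" "last ys = v"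
    using assms unfolding connected_graph_def by blast
  have ne: "ys \<noteq> []" using ys(1) by (simp add: walk_def)
  have ex: "\<exists>n xs. walk V E xs \<and> hd xs = u \<and> last xs = v \<and> length xs = Suc n"
    using ys ne by (intro exI[of _ "length ys - 1"] exI[of _ ys]) auto
  show ?thesis unfolding gdist_def by (rule LeastI_ex[OF ex])
qed

lemma gdist_refl: "u \<in> V \<Longrightarrow> gdist V E u u = 0"
  using gdist_le[of V E "[u]" u u] by simp

lemma gdist_sym:
  assumes "connected_graph V E" "u \<in> V" "v \<in> V"
  shows "gdist V E u v = gdist V E v u"
proof -
  have "gdist V E v u \<le> gdist V E u v" if uv: "u \<in> V" "v \<in> V" for u v
  proof -
    obtain xs where xs: "walk V E xs" "hd xs = u" "last xs = v" "length xs = Suc (gdist V E u v)"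
      using gdist_walk[OF assms(1) uv] by blast
    have ne: "xs \<noteq> []" using xs(1) by (simp add: walk_def)
    have "gdist V E v u < length (rev xs)"
      by (rule gdist_le[OF walk_rev[OF xs(1)]]) (use xs ne in \<open>auto simp: hd_rev last_rev\<close>)
    then show ?thesis using xs by simp
  qed
  then show ?thesis using assms by (meson le_antisym)
qed

lemma gdist_triangle:
  assumes "connected_graph V E" "u \<in> V" "v \<in> V" "w \<in> V"
  shows "gdist V E u w \<le> gdist V E u v + gdist V E v w"
proof -
  obtain xs where xs: "walk V E xs" "hd xs = u" "last xs = v" "length xs = Suc (gdist V E u v)"
    using gdist_walk[OF assms(1,2,3)] by blast
  obtain ys where ys: "walk V E ys" "hd ys = v" "last ys = w" "length ys = Suc (gdist V E v w)"
    using gdist_walk[OF assms(1,3,4)] by blast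
  have w: "walk V E (xs @ tl ys)" using walk_append[OF xs(1) ys(1)] xs ys by simp
  have ne: "xs \<noteq> []" "ys \<noteq> []" using xs(1) ys(1) by (auto simp: walk_def)
  have "last (xs @ tl ys) = w"
    using ne xs ys by (cases ys) (auto)
  then have "gdist V E u w < length (xs @ tl ys)"
    using gdist_le[OF w] xs ne by auto
  then show ?thesis using xs ys by simp
qed

lemma gdist_0:
  assumes "connected_graph V E" "u \<in> V" "v \<in> V" "gdist V E u v = 0"
  shows "u = v"
proof -
  obtain xs where xs: "walk V E xs" "hd xs = u" "last xs = v" "length xs = Suc 0"
    using gdist_walk[OF assms(1,2,3)] assms(4) by auto
  then show ?thesis by (cases xs) auto
qed

lemma interval_iff:
  assumes "connected_graph V E" "u \<in> V" "v \<in> V"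
  shows "w \<in> interval V E u v \<longleftrightarrow> w \<in> V \<and> gdist V E u w + gdist V E w v = gdist V E u v"
proof
  assume "w \<in> interval V E u v"
  then obtain xs where xs: "walk V E xs" "hd xs = u" "last xs = v"
      "length xs = Suc (gdist V E u v)" "w \<in> set xs"
    unfolding interval_def by blast
  obtain k where k: "k < length xs" "xs ! k = w" using xs(5) by (auto simp: in_set_conv_nth)
  have ne: "xs \<noteq> []" using xs(1) by (simp add: walk_def)
  have wV: "w \<in> V" using xs(1,5) by (auto simp: walk_def)
  have h1: "hd (take (Suc k) xs) = u" using ne xs(2) by (cases xs) auto
  have h2: "last (take (Suc k) xs) = w" using k by (simp add: take_Suc_conv_app_nth)
  have "gdist V E u w < length (take (Suc k) xs)"
    by (rule gdist_le[OF walk_take[OF xs(1) k(1)] h1 h2])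
  moreover have "gdist V E w v < length (drop k xs)"
    by (rule gdist_le[OF walk_drop[OF xs(1) k(1)]])
      (use xs k ne in \<open>auto simp: hd_drop_conv_nth\<close>)
  ultimately have "gdist V E u w + gdist V E w v \<le> gdist V E u v"
    using k xs(4) by simp
  moreover have "gdist V E u v \<le> gdist V E u w + gdist V E w v"
    by (rule gdist_triangle[OF assms(1,2) wV assms(3)])
  ultimately show "w \<in> V \<and> gdist V E u w + gdist V E w v = gdist V E u v" using wV by simp
next
  assume h: "w \<in> V \<and> gdist V E u w + gdist V E w v = gdist V E u v"
  obtain xs where xs: "walk V E xs" "hd xs = u" "last xs = w" "length xs = Suc (gdist V E u w)"
    using gdist_walk[OF assms(1,2)] h by blast
  obtain ys where ys: "walk V E ys" "hd ys = w" "last ys = v" "length ys = Suc (gdist V E w v)"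
    using gdist_walk[OF assms(1)] h assms(3) by blast
  have wk: "walk V E (xs @ tl ys)" using walk_append[OF xs(1) ys(1)] xs ys by simp
  have ne: "xs \<noteq> []" "ys \<noteq> []" using xs(1) ys(1) by (auto simp: walk_def)
  have "last (xs @ tl ys) = v"
    using ne xs ys by (cases ys) (auto)
  moreover have "hd (xs @ tl ys) = u" using ne xs by simp
  moreover have "length (xs @ tl ys) = Suc (gdist V E u v)" using xs ys h by simp
  moreover have "w \<in> set (xs @ tl ys)" using ne xs by auto
  ultimately show "w \<in> interval V E u v" unfolding interval_def using wk by blast
qed



definition ad :: "nat \<Rightarrow> nat \<Rightarrow> nat" where "ad a b = (a - b) + (b - a)"
definition l1 :: "nat list \<Rightarrow> nat list \<Rightarrow> nat" where
  "l1 xs ys = (\<Sum>j<length xs. ad (xs ! j) (ys ! j))"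

lemma ad_commute: "ad a b = ad b a" by (simp add: ad_def)
lemma ad_self[simp]: "ad a a = 0" by (simp add: ad_def)
lemma ad_0_iff[simp]: "ad a b = 0 \<longleftrightarrow> a = b" by (auto simp: ad_def)
lemma ad_triangle: "ad a c \<le> ad a b + ad b c" by (simp add: ad_def)
lemma ad_between: "ad a w + ad w b = ad a b \<longleftrightarrow> min a b \<le> w \<and> w \<le> max a b"
  by (auto simp: ad_def min_def max_def)

lemma lattice_V_len: "x \<in> lattice_V ns \<Longrightarrow> length x = length ns"
  by (simp add: lattice_V_def)

lemma finite_lattice_V: "finite (lattice_V ns)"
proof -
  have "lattice_V ns \<subseteq> {xs. set xs \<subseteq> {..<sum_list ns} \<and> length xs = length ns}"
  proof
    fix xs assume "xs \<in> lattice_V ns"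
    then have h: "length xs = length ns" "\<forall>j<length ns. xs ! j < ns ! j" by (auto simp: lattice_V_def)
    have "set xs \<subseteq> {..<sum_list ns}"
    proof
      fix t assume "t \<in> set xs"
      then obtain j where "j < length xs" "xs ! j = t" by (auto simp: in_set_conv_nth)
      then show "t \<in> {..<sum_list ns}" using h elem_le_sum_list[of j ns] by fastforce
    qed
    then show "xs \<in> {xs. set xs \<subseteq> {..<sum_list ns} \<and> length xs = length ns}" using h by simp
  qed
  moreover have "finite {xs. set xs \<subseteq> {..<sum_list ns} \<and> length xs = length ns}"
    by (rule finite_lists_length_eq) simp
  ultimately show ?thesis by (rule finite_subset)
qed

lemma l1_commute: "length x = length y \<Longrightarrow> l1 x y = l1 y x"
  by (simp add: l1_def ad_commute)

lemma l1_triangle: "length x = length y \<Longrightarrow> l1 x z \<le> l1 x y + l1 y z"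
  unfolding l1_def by (simp add: sum.distrib[symmetric] sum_mono ad_triangle)

lemma l1_0: "length x = length y \<Longrightarrow> l1 x y = 0 \<longleftrightarrow> x = y"
  by (auto simp: l1_def intro: nth_equalityI)

lemma lattice_edge:
  assumes "{x, y} \<in> lattice_E ns"
  shows "x \<in> lattice_V ns \<and> y \<in> lattice_V ns \<and> l1 x y = 1 \<and> x \<noteq> y"
proof -
  obtain xs ys j where h: "{x,y} = {xs,ys}" "xs \<in> lattice_V ns" "ys \<in> lattice_V ns" "j < length ns"
    "Suc (xs ! j) = ys ! j" "\<forall>l<length ns. l \<noteq> j \<longrightarrow> xs ! l = ys ! l"
    using assms unfolding lattice_E_def by blast
  have len: "length xs = length ns" "length ys = length ns" using h by (auto simp: lattice_V_def)
  have ne: "xs \<noteq> ys" using h(5) by auto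
  have "l1 xs ys = (\<Sum>l<length ns. if l = j then 1 else 0)"
    unfolding l1_def len by (rule sum.cong) (use h in \<open>auto simp: ad_def\<close>)
  also have "\<dots> = 1" using h(4) by simp
  finally have l: "l1 xs ys = 1" .
  have "(x = xs \<and> y = ys) \<or> (x = ys \<and> y = xs)" using h(1) ne by (auto simp: doubleton_eq_iff)
  then show ?thesis using l h(2,3) len ne l1_commute[of xs ys] by auto
qed

lemma graph_lattice: "graph (lattice_V ns) (lattice_E ns)"
  unfolding graph_def
proof (intro conjI ballI)
  show "finite (lattice_V ns)" by (rule finite_lattice_V)
next
  fix e assume "e \<in> lattice_E ns"
  then obtain xs ys where "e = {xs, ys}" unfolding lattice_E_def by blast
  with lattice_edge[of xs ys ns] \<open>e \<in> lattice_E ns\<close>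
  show "\<exists>x y. x \<noteq> y \<and> x \<in> lattice_V ns \<and> y \<in> lattice_V ns \<and> e = {x, y}" by blast
qed

lemma walk_l1:
  "walk (lattice_V ns) (lattice_E ns) xs \<Longrightarrow> l1 (hd xs) (last xs) < length xs"
proof (induction xs)
  case Nil then show ?case by (simp add: walk_def)
next
  case (Cons x xs)
  show ?case
  proof (cases xs)
    case Nil
    then show ?thesis using Cons.prems
      by (simp add: l1_0 lattice_V_len)
  next
    case (Cons y rest)
    have e: "{x,y} \<in> lattice_E ns" and w: "walk (lattice_V ns) (lattice_E ns) xs"
      using Cons.prems \<open>xs = y # rest\<close> by (auto simp: walk_Cons2)
    have "length x = length y" using lattice_edge[OF e] lattice_V_len[of x ns] lattice_V_len[of y ns] by simp
    then have le: "l1 x (last xs) \<le> l1 x y + l1 y (last xs)"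
      by (rule l1_triangle)
    have "l1 y (last xs) < length xs" using Cons.IH[OF w] \<open>xs = y # rest\<close> by simp
    then show ?thesis using le lattice_edge[OF e] \<open>xs = y # rest\<close> by simp
  qed
qed

lemma lattice_walk_ex:
  assumes "x \<in> lattice_V ns" "y \<in> lattice_V ns"
  shows "\<exists>xs. walk (lattice_V ns) (lattice_E ns) xs \<and> hd xs = x \<and> last xs = y \<and>
               length xs = Suc (l1 x y)"
  using assms
proof (induction "l1 x y" arbitrary: x)
  case 0
  then have "x = y" using l1_0[of x y] by (simp add: lattice_V_len)
  then show ?case using 0 by (intro exI[of _ "[x]"]) simp
next
  case (Suc d)
  have len: "length x = length ns" "length y = length ns" using Suc.prems by (auto simp: lattice_V_len)
  have "x \<noteq> y" using Suc.hyps(2) by (auto simp: l1_def)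
  then obtain j where j: "j < length ns" "x ! j \<noteq> y ! j" using len by (metis nth_equalityI)
  define c where "c = (if x ! j < y ! j then Suc (x ! j) else x ! j - 1)"
  define x' where "x' = x[j := c]"
  have xj: "x ! j < ns ! j" "y ! j < ns ! j" using Suc.prems j by (auto simp: lattice_V_def)
  have x'V: "x' \<in> lattice_V ns"
    using Suc.prems j xj unfolding x'_def c_def lattice_V_def by (auto simp: nth_list_update)
  have lenx': "length x' = length ns" using x'V by (simp add: lattice_V_len)
  have edge: "{x, x'} \<in> lattice_E ns"
  proof (cases "x ! j < y ! j")
    case True
    show ?thesis unfolding lattice_E_def
      by (rule CollectI, rule exI[of _ x], rule exI[of _ x'])
        (use Suc.prems x'V j True len in \<open>auto simp: x'_def c_def nth_list_update\<close>)
  next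
    case False
    then have "x ! j > y ! j" using j by simp
    then have "{x, x'} = {x', x}" by auto
    moreover have "{x', x} \<in> lattice_E ns" unfolding lattice_E_def
      by (rule CollectI, rule exI[of _ x'], rule exI[of _ x])
        (use Suc.prems x'V j False \<open>x ! j > y ! j\<close> len in \<open>auto simp: x'_def c_def nth_list_update\<close>)
    ultimately show ?thesis by simp
  qed
  have adj: "ad (x ! j) (y ! j) = Suc (ad (x' ! j) (y ! j))"
    using j len by (auto simp: x'_def c_def ad_def)
  have "l1 x y = ad (x ! j) (y ! j) + (\<Sum>l\<in>{..<length ns} - {j}. ad (x ! l) (y ! l))"
    unfolding l1_def len using j by (simp add: sum.remove)
  moreover have "l1 x' y = ad (x' ! j) (y ! j) + (\<Sum>l\<in>{..<length ns} - {j}. ad (x' ! l) (y ! l))"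
    unfolding l1_def lenx' using j by (simp add: sum.remove)
  moreover have "(\<Sum>l\<in>{..<length ns} - {j}. ad (x' ! l) (y ! l)) = (\<Sum>l\<in>{..<length ns} - {j}. ad (x ! l) (y ! l))"
    by (rule sum.cong) (auto simp: x'_def)
  ultimately have "d = l1 x' y" using Suc.hyps(2) adj by simp
  from Suc.hyps(1)[OF this x'V Suc.prems(2)] obtain xs where
    xs: "walk (lattice_V ns) (lattice_E ns) xs" "hd xs = x'" "last xs = y" "length xs = Suc (l1 x' y)"
    by blast
  obtain rest where xsr: "xs = x' # rest" using xs(1,2) by (cases xs) (auto simp: walk_def)
  have "walk (lattice_V ns) (lattice_E ns) (x # xs)"
    using xs(1) xsr edge Suc.prems(1) by (simp add: walk_Cons2)
  then show ?case using xs xsr \<open>d = l1 x' y\<close> Suc.hyps(2)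
    by (intro exI[of _ "x # xs"]) auto
qed

lemma connected_lattice:
  assumes "lattice_V ns \<noteq> {}"
  shows "connected_graph (lattice_V ns) (lattice_E ns)"
  unfolding connected_graph_def using assms lattice_walk_ex by blast

lemma gdist_lattice:
  assumes "x \<in> lattice_V ns" "y \<in> lattice_V ns"
  shows "gdist (lattice_V ns) (lattice_E ns) x y = l1 x y"
proof -
  have c: "connected_graph (lattice_V ns) (lattice_E ns)" using assms connected_lattice by blast
  obtain xs where xs: "walk (lattice_V ns) (lattice_E ns) xs" "hd xs = x" "last xs = y"
    "length xs = Suc (l1 x y)" using lattice_walk_ex[OF assms] by blast
  obtain ys where ys: "walk (lattice_V ns) (lattice_E ns) ys" "hd ys = x" "last ys = y"
    "length ys = Suc (gdist (lattice_V ns) (lattice_E ns) x y)" using gdist_walk[OF c assms] by blast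
  show ?thesis using gdist_le[OF xs(1-3)] xs(4) walk_l1[OF ys(1)] ys by simp
qed

lemma l1_between:
  assumes "length x = length ns" "length y = length ns" "length w = length ns"
  shows "l1 x w + l1 w y = l1 x y \<longleftrightarrow> (\<forall>j<length ns. ad (x!j) (w!j) + ad (w!j) (y!j) = ad (x!j) (y!j))"
proof
  assume h: "l1 x w + l1 w y = l1 x y"
  have "sum (\<lambda>j. ad (x!j) (y!j)) {..<length ns} = sum (\<lambda>j. ad (x!j) (w!j) + ad (w!j) (y!j)) {..<length ns}"
    using h assms by (simp add: l1_def sum.distrib)
  then show "\<forall>j<length ns. ad (x!j) (w!j) + ad (w!j) (y!j) = ad (x!j) (y!j)"
    using sum_mono_inv[of "\<lambda>j. ad (x!j) (y!j)" "{..<length ns}" "\<lambda>j. ad (x!j) (w!j) + ad (w!j) (y!j)"]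
      ad_triangle by (metis finite_lessThan lessThan_iff)
next
  assume "\<forall>j<length ns. ad (x!j) (w!j) + ad (w!j) (y!j) = ad (x!j) (y!j)"
  then show "l1 x w + l1 w y = l1 x y" using assms by (simp add: l1_def sum.distrib[symmetric])
qed

lemma interval_lattice:
  assumes "x \<in> lattice_V ns" "y \<in> lattice_V ns"
  shows "w \<in> interval (lattice_V ns) (lattice_E ns) x y \<longleftrightarrow>
     w \<in> lattice_V ns \<and> (\<forall>j<length ns. min (x!j) (y!j) \<le> w!j \<and> w!j \<le> max (x!j) (y!j))"
proof -
  have c: "connected_graph (lattice_V ns) (lattice_E ns)" using assms connected_lattice by blast
  show ?thesis
    unfolding interval_iff[OF c assms]
    using gdist_lattice[OF assms(1)] gdist_lattice[OF _ assms(2)] gdist_lattice[OF assms]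
      l1_between[of x ns y w] ad_between lattice_V_len[OF assms(1)] lattice_V_len[OF assms(2)]
      lattice_V_len[of w ns]
    by auto
qed

definition med3 :: "nat \<Rightarrow> nat \<Rightarrow> nat \<Rightarrow> nat" where
  "med3 a b c = max (min a b) (min (max a b) c)"

lemma med3_iff:
  "(min a b \<le> w \<and> w \<le> max a b) \<and> (min b c \<le> w \<and> w \<le> max b c) \<and> (min c a \<le> w \<and> w \<le> max c a)
   \<longleftrightarrow> w = med3 a b c"
  by (auto simp: med3_def min_def max_def)

lemma median_lattice:
  assumes "lattice_V ns \<noteq> {}"
  shows "median_graph (lattice_V ns) (lattice_E ns)"
  unfolding median_graph_def
proof (intro conjI ballI)
  show "graph (lattice_V ns) (lattice_E ns)" by (rule graph_lattice)
  show "connected_graph (lattice_V ns) (lattice_E ns)" using assms by (rule connected_lattice)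
next
  fix x y z assume xyz: "x \<in> lattice_V ns" "y \<in> lattice_V ns" "z \<in> lattice_V ns"
  define m where "m = map (\<lambda>j. med3 (x!j) (y!j) (z!j)) [0..<length ns]"
  have mV: "m \<in> lattice_V ns" using xyz unfolding lattice_V_def m_def
    by (auto simp: med3_def min_def max_def)
  have "interval (lattice_V ns) (lattice_E ns) x y \<inter> interval (lattice_V ns) (lattice_E ns) y z \<inter>
        interval (lattice_V ns) (lattice_E ns) z x = {m}"
  proof (intro equalityI subsetI)
    fix w assume "w \<in> interval (lattice_V ns) (lattice_E ns) x y \<inter> interval (lattice_V ns) (lattice_E ns) y z \<inter>
        interval (lattice_V ns) (lattice_E ns) z x"
    then have w1: "w \<in> interval (lattice_V ns) (lattice_E ns) x y"
      and w2: "w \<in> interval (lattice_V ns) (lattice_E ns) y z"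
      and w3: "w \<in> interval (lattice_V ns) (lattice_E ns) z x" by auto
    have i1: "w \<in> lattice_V ns" "\<forall>j<length ns. min (x!j) (y!j) \<le> w!j \<and> w!j \<le> max (x!j) (y!j)"
      using w1[unfolded interval_lattice[OF xyz(1,2)]] by auto
    have i2: "\<forall>j<length ns. min (y!j) (z!j) \<le> w!j \<and> w!j \<le> max (y!j) (z!j)"
      using w2[unfolded interval_lattice[OF xyz(2,3)]] by auto
    have i3: "\<forall>j<length ns. min (z!j) (x!j) \<le> w!j \<and> w!j \<le> max (z!j) (x!j)"
      using w3[unfolded interval_lattice[OF xyz(3,1)]] by auto
    have w: "w \<in> lattice_V ns" "\<forall>j<length ns. w ! j = med3 (x!j) (y!j) (z!j)"
    proof -
      show "w \<in> lattice_V ns" by (rule i1(1))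
      show "\<forall>j<length ns. w ! j = med3 (x!j) (y!j) (z!j)"
      proof (intro allI impI)
        fix j assume "j < length ns"
        then show "w ! j = med3 (x!j) (y!j) (z!j)"
          using i1(2) i2 i3 med3_iff[of "x!j" "y!j" "w!j" "z!j"] by blast
      qed
    qed
    show "w \<in> {m}" using w lattice_V_len[OF w(1)] unfolding m_def
      by (auto intro: nth_equalityI)
  next
    fix w assume "w \<in> {m}"
    then show "w \<in> interval (lattice_V ns) (lattice_E ns) x y \<inter> interval (lattice_V ns) (lattice_E ns) y z \<inter>
        interval (lattice_V ns) (lattice_E ns) z x"
      using mV med3_iff[of "x!j" "y!j" "med3 (x!j) (y!j) (z!j)" "z!j" for j]
      by (auto simp: interval_lattice[OF xyz(1,2)] interval_lattice[OF xyz(2,3)]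
        interval_lattice[OF xyz(3,1)] m_def)
  qed
  then show "card (interval (lattice_V ns) (lattice_E ns) x y \<inter> interval (lattice_V ns) (lattice_E ns) y z \<inter>
        interval (lattice_V ns) (lattice_E ns) z x) = 1" by simp
qed



locale transfer =
  fixes V :: "'a set" and E :: "'a set set" and g :: "'a \<Rightarrow> 'b"
  assumes gr: "graph V E" and inj: "inj_on g V"
begin

abbreviation "V' \<equiv> g ` V"
abbreviation "E' \<equiv> (\<lambda>e. g ` e) ` E"

lemma edge_tr:
  assumes "x \<in> V" "y \<in> V"
  shows "{g x, g y} \<in> E' \<longleftrightarrow> {x, y} \<in> E"
proof
  assume "{g x, g y} \<in> E'"
  then obtain e where e: "e \<in> E" "{g x, g y} = g ` e" by auto
  obtain a b where ab: "a \<in> V" "b \<in> V" "e = {a, b}" using gr e(1) unfolding graph_def by blast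
  have "{g x, g y} = {g a, g b}" using e ab by simp
  then have "(g x = g a \<and> g y = g b) \<or> (g x = g b \<and> g y = g a)" by (auto simp: doubleton_eq_iff)
  then have "(x = a \<and> y = b) \<or> (x = b \<and> y = a)" using inj assms ab by (auto dest: inj_onD)
  then show "{x, y} \<in> E" using e ab by (auto simp: insert_commute)
next
  assume "{x, y} \<in> E"
  then have "g ` {x, y} \<in> E'" by blast
  then show "{g x, g y} \<in> E'" by simp
qed

lemma walk_map:
  assumes "set xs \<subseteq> V"
  shows "walk V' E' (map g xs) \<longleftrightarrow> walk V E xs"
proof -
  have "(\<forall>k. Suc k < length xs \<longrightarrow> {g (xs ! k), g (xs ! Suc k)} \<in> E') \<longleftrightarrow>
        (\<forall>k. Suc k < length xs \<longrightarrow> {xs ! k, xs ! Suc k} \<in> E)"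
    using edge_tr assms by (auto simp: subset_iff)
  then show ?thesis using assms unfolding walk_def by auto
qed

lemma walk_inv:
  assumes "walk V' E' ys"
  shows "ys = map g (map (inv_into V g) ys) \<and> set (map (inv_into V g) ys) \<subseteq> V \<and>
         walk V E (map (inv_into V g) ys)"
proof -
  have s: "set ys \<subseteq> V'" using assms by (simp add: walk_def)
  have "map (g \<circ> inv_into V g) ys = ys" by (rule map_idI) (use s in \<open>auto simp: f_inv_into_f\<close>)
  then have e: "ys = map g (map (inv_into V g) ys)" by simp
  have s2: "set (map (inv_into V g) ys) \<subseteq> V" using s by (auto simp: inv_into_into)
  show ?thesis using e s2 walk_map[OF s2] assms by simp
qed

lemma walk'_iff:
  "walk V' E' ys \<longleftrightarrow> (\<exists>xs. set xs \<subseteq> V \<and> walk V E xs \<and> ys = map g xs)"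
proof
  assume "walk V' E' ys"
  then show "\<exists>xs. set xs \<subseteq> V \<and> walk V E xs \<and> ys = map g xs" using walk_inv by blast
next
  assume "\<exists>xs. set xs \<subseteq> V \<and> walk V E xs \<and> ys = map g xs"
  then show "walk V' E' ys" using walk_map by blast
qed

lemma gdist_tr:
  assumes "x \<in> V" "y \<in> V"
  shows "gdist V' E' (g x) (g y) = gdist V E x y"
proof -
  have "(\<exists>ys. walk V' E' ys \<and> hd ys = g x \<and> last ys = g y \<and> length ys = Suc n) \<longleftrightarrow>
        (\<exists>xs. walk V E xs \<and> hd xs = x \<and> last xs = y \<and> length xs = Suc n)" for n
  proof
    assume "\<exists>ys. walk V' E' ys \<and> hd ys = g x \<and> last ys = g y \<and> length ys = Suc n"
    then obtain xs where xs: "set xs \<subseteq> V" "walk V E xs" "hd (map g xs) = g x" "last (map g xs) = g y"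
       "length xs = Suc n" unfolding walk'_iff by auto
    have ne: "xs \<noteq> []" using xs by auto
    have "g (hd xs) = g x" "g (last xs) = g y" using xs ne by (auto simp: hd_map last_map)
    moreover have "hd xs \<in> V" "last xs \<in> V" using xs(1) ne by auto
    ultimately have "hd xs = x" "last xs = y" using inj_onD[OF inj] assms by metis+
    then show "\<exists>xs. walk V E xs \<and> hd xs = x \<and> last xs = y \<and> length xs = Suc n" using xs by blast
  next
    assume "\<exists>xs. walk V E xs \<and> hd xs = x \<and> last xs = y \<and> length xs = Suc n"
    then obtain xs where xs: "walk V E xs" "hd xs = x" "last xs = y" "length xs = Suc n" by blast
    have ne: "xs \<noteq> []" using xs by auto
    show "\<exists>ys. walk V' E' ys \<and> hd ys = g x \<and> last ys = g y \<and> length ys = Suc n"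
      using xs ne walk_map[of xs] by (intro exI[of _ "map g xs"]) (auto simp: hd_map last_map walk_def)
  qed
  then show ?thesis unfolding gdist_def by simp
qed

lemma interval_tr:
  assumes "x \<in> V" "y \<in> V"
  shows "interval V' E' (g x) (g y) = g ` interval V E x y"
proof (intro equalityI subsetI)
  fix w assume "w \<in> interval V' E' (g x) (g y)"
  then obtain ys where ys: "walk V' E' ys" "hd ys = g x" "last ys = g y"
    "length ys = Suc (gdist V E x y)" "w \<in> set ys"
    unfolding interval_def gdist_tr[OF assms] by blast
  then obtain xs where xs: "set xs \<subseteq> V" "walk V E xs" "ys = map g xs" unfolding walk'_iff by blast
  have ne: "xs \<noteq> []" using xs by (auto simp: walk_def)
  have "g (hd xs) = g x" "g (last xs) = g y" using xs ne ys by (auto simp: hd_map last_map)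
  moreover have "hd xs \<in> V" "last xs \<in> V" using xs(1) ne by auto
  ultimately have "hd xs = x" "last xs = y" using inj_onD[OF inj] assms by metis+
  moreover obtain v where "v \<in> set xs" "w = g v" using ys xs by auto
  ultimately show "w \<in> g ` interval V E x y" using xs ys unfolding interval_def by auto
next
  fix w assume "w \<in> g ` interval V E x y"
  then obtain v xs where xs: "walk V E xs" "hd xs = x" "last xs = y"
    "length xs = Suc (gdist V E x y)" "v \<in> set xs" "w = g v"
    unfolding interval_def by blast
  have ne: "xs \<noteq> []" using xs by (auto simp: walk_def)
  have "walk V' E' (map g xs)" using walk_map[of xs] xs by (auto simp: walk_def)
  then show "w \<in> interval V' E' (g x) (g y)" unfolding interval_def gdist_tr[OF assms]
    using xs ne by (intro CollectI exI[of _ "map g xs"]) (auto simp: hd_map last_map)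
qed

lemma graph_tr: "graph V' E'"
  unfolding graph_def
proof (intro conjI ballI)
  show "finite V'" using gr by (simp add: graph_def)
next
  fix e assume "e \<in> E'"
  then obtain e0 where e0: "e0 \<in> E" "e = g ` e0" by blast
  then obtain a b where ab: "a \<noteq> b" "a \<in> V" "b \<in> V" "e0 = {a, b}" using gr unfolding graph_def by blast
  have "g a \<noteq> g b" using ab inj by (auto dest: inj_onD)
  then show "\<exists>x y. x \<noteq> y \<and> x \<in> V' \<and> y \<in> V' \<and> e = {x, y}" using ab e0 by blast
qed

lemma connected_tr:
  assumes "connected_graph V E"
  shows "connected_graph V' E'"
  unfolding connected_graph_def
proof (intro conjI ballI)
  show "V' \<noteq> {}" using assms by (simp add: connected_graph_def)
next
  fix u v assume "u \<in> V'" "v \<in> V'"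
  then obtain x y where xy: "x \<in> V" "y \<in> V" "u = g x" "v = g y" by blast
  then obtain xs where xs: "walk V E xs" "hd xs = x" "last xs = y"
    using assms unfolding connected_graph_def by blast
  have ne: "xs \<noteq> []" using xs by (auto simp: walk_def)
  show "\<exists>xs. walk V' E' xs \<and> hd xs = u \<and> last xs = v"
    using walk_map[of xs] xs ne xy by (intro exI[of _ "map g xs"]) (auto simp: hd_map last_map walk_def)
qed

lemma median_tr:
  assumes "median_graph V E"
  shows "median_graph V' E'"
  unfolding median_graph_def
proof (intro conjI ballI)
  show "graph V' E'" by (rule graph_tr)
  show "connected_graph V' E'" using assms connected_tr by (simp add: median_graph_def)
next
  fix u v w assume "u \<in> V'" "v \<in> V'" "w \<in> V'"
  then obtain x y z where xyz: "x \<in> V" "y \<in> V" "z \<in> V" "u = g x" "v = g y" "w = g z" by blast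
  have sub: "interval V E x y \<subseteq> V" "interval V E y z \<subseteq> V" "interval V E z x \<subseteq> V"
    by (auto simp: interval_def walk_def)
  have "interval V' E' u v \<inter> interval V' E' v w \<inter> interval V' E' w u =
        g ` (interval V E x y \<inter> interval V E y z \<inter> interval V E z x)"
    unfolding xyz(4-6) interval_tr[OF xyz(1,2)] interval_tr[OF xyz(2,3)] interval_tr[OF xyz(3,1)]
    using inj_on_image_Int[OF inj, of "interval V E x y \<inter> interval V E y z" "interval V E z x"]
      inj_on_image_Int[OF inj, of "interval V E x y" "interval V E y z"] sub by auto
  moreover have "inj_on g (interval V E x y \<inter> interval V E y z \<inter> interval V E z x)"
    using inj sub by (meson inj_on_subset le_infI1)
  ultimately show "card (interval V' E' u v \<inter> interval V' E' v w \<inter> interval V' E' w u) = 1"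
    using assms xyz unfolding median_graph_def by (simp add: card_image)
qed

lemma convex_tr:
  assumes "S \<subseteq> V" "convex V E S"
  shows "convex V' E' (g ` S)"
  unfolding convex_def
proof (intro conjI ballI)
  show "g ` S \<subseteq> V'" using assms by auto
next
  fix u v assume "u \<in> g ` S" "v \<in> g ` S"
  then obtain x y where xy: "x \<in> S" "y \<in> S" "u = g x" "v = g y" by blast
  have xyV: "x \<in> V" "y \<in> V" using xy assms by auto
  have "interval V E x y \<subseteq> S" using assms xy unfolding convex_def by blast
  then show "interval V' E' u v \<subseteq> g ` S" using interval_tr[OF xyV] xy by auto
qed

end



definition contig :: "nat set \<Rightarrow> bool" where
  "contig T \<longleftrightarrow> (\<forall>a\<in>T. \<forall>b\<in>T. \<forall>t. a \<le> t \<and> t \<le> b \<longrightarrow> t \<in> T)"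

lemma walk_upt:
  assumes "a \<le> b" "b < n" "\<forall>t. a \<le> t \<and> t \<le> b \<longrightarrow> t \<in> T"
  shows "walk T {e \<in> path_E n. e \<subseteq> T} [a..<Suc b]"
  unfolding walk_def
proof (intro conjI allI impI)
  show "[a..<Suc b] \<noteq> []" using assms by simp
  show "set [a..<Suc b] \<subseteq> T" using assms by auto
next
  fix k assume k: "Suc k < length [a..<Suc b]"
  then have "[a..<Suc b] ! k = a + k" "[a..<Suc b] ! Suc k = Suc (a + k)" by (simp_all del: upt_Suc)
  moreover have "{a + k, Suc (a + k)} \<in> path_E n" using k assms unfolding path_E_def by auto
  moreover have "{a + k, Suc (a + k)} \<subseteq> T" using k assms by auto
  ultimately show "{[a..<Suc b] ! k, [a..<Suc b] ! Suc k} \<in> {e \<in> path_E n. e \<subseteq> T}" by simp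
qed

lemma path_conn:
  assumes "T \<subseteq> {..<n}" "T \<noteq> {}" "contig T"
  shows "connected_graph T {e \<in> path_E n. e \<subseteq> T}"
  unfolding connected_graph_def
proof (intro conjI ballI)
  show "T \<noteq> {}" by fact
next
  have main: "\<exists>xs. walk T {e \<in> path_E n. e \<subseteq> T} xs \<and> hd xs = a \<and> last xs = b"
    if ab: "a \<in> T" "b \<in> T" "a \<le> b" for a b
  proof -
    have "b < n" using ab assms by auto
    moreover have "\<forall>t. a \<le> t \<and> t \<le> b \<longrightarrow> t \<in> T" using ab assms(3) unfolding contig_def by blast
    ultimately show ?thesis using walk_upt[of a b n T] ab
      by (intro exI[of _ "[a..<Suc b]"]) (simp del: upt_Suc add: hd_upt last_upt)
  qed
  fix a b assume ab: "a \<in> T" "b \<in> T"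
  show "\<exists>xs. walk T {e \<in> path_E n. e \<subseteq> T} xs \<and> hd xs = a \<and> last xs = b"
  proof (cases "a \<le> b")
    case True then show ?thesis using main ab by blast
  next
    case False
    then obtain xs where xs: "walk T {e \<in> path_E n. e \<subseteq> T} xs" "hd xs = b" "last xs = a"
      using main[of b a] ab by auto
    have "xs \<noteq> []" using xs by (auto simp: walk_def)
    then show ?thesis using walk_rev[OF xs(1)] xs by (intro exI[of _ "rev xs"]) (auto simp: hd_rev last_rev)
  qed
qed

lemma ivt:
  "xs \<noteq> [] \<Longrightarrow> (\<forall>k. Suc k < length xs \<longrightarrow> xs ! Suc k \<le> Suc (xs ! k)) \<Longrightarrow>
   hd xs \<le> t \<Longrightarrow> t \<le> last xs \<Longrightarrow> t \<in> set xs"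
proof (induction xs)
  case Nil then show ?case by simp
next
  case (Cons x xs)
  show ?case
  proof (cases "xs = [] \<or> t = x")
    case True then show ?thesis using Cons.prems by auto
  next
    case False
    then have ne: "xs \<noteq> []" and tx: "t \<noteq> x" by auto
    have st: "\<forall>k. Suc k < length xs \<longrightarrow> xs ! Suc k \<le> Suc (xs ! k)"
    proof (intro allI impI)
      fix k assume "Suc k < length xs"
      then show "xs ! Suc k \<le> Suc (xs ! k)" using Cons.prems(2)[rule_format, of "Suc k"] by simp
    qed
    have "hd xs \<le> Suc x" using Cons.prems(2)[rule_format, of 0] ne by (cases xs) auto
    then have "hd xs \<le> t" using Cons.prems(3) tx by simp
    then have "t \<in> set xs" using Cons.IH[OF ne st] Cons.prems(4) ne by simp
    then show ?thesis by simp
  qed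
qed

lemma conn_contig:
  assumes "connected_graph T {e \<in> path_E n. e \<subseteq> T}"
  shows "contig T"
  unfolding contig_def
proof (intro ballI allI impI)
  fix a b t assume ab: "a \<in> T" "b \<in> T" "a \<le> t \<and> t \<le> b"
  obtain xs where xs: "walk T {e \<in> path_E n. e \<subseteq> T} xs" "hd xs = a" "last xs = b"
    using assms ab unfolding connected_graph_def by blast
  have st: "\<forall>k. Suc k < length xs \<longrightarrow> xs ! Suc k \<le> Suc (xs ! k)"
  proof (intro allI impI)
    fix k assume "Suc k < length xs"
    then have "{xs ! k, xs ! Suc k} \<in> path_E n" using xs(1) unfolding walk_def by blast
    then obtain m where "{xs ! k, xs ! Suc k} = {m, Suc m}" unfolding path_E_def by blast
    then show "xs ! Suc k \<le> Suc (xs ! k)" by (auto simp: doubleton_eq_iff)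
  qed
  have "t \<in> set xs" using ivt[OF _ st] xs ab by (auto simp: walk_def)
  then show "t \<in> T" using xs(1) by (auto simp: walk_def)
qed



locale dir2 =
  fixes V :: "'a set" and E :: "'a set set" and VM :: "nat set" and EM X ns f
  assumes gV: "graph V E" and md: "median_decomp V E VM EM X"
    and emb: "isometric_embedding VM EM (lattice_V ns) (lattice_E ns) f"
begin

lemma mg: "median_graph VM EM" using md by (simp add: median_decomp_def)
lemma conn: "connected_graph VM EM" using mg by (simp add: median_graph_def)
lemma finVM: "finite VM" using mg by (simp add: median_graph_def graph_def)
lemma VMne: "VM \<noteq> {}" using conn by (simp add: connected_graph_def)

lemma fL: "a \<in> VM \<Longrightarrow> f a \<in> lattice_V ns"
  using emb by (auto simp: isometric_embedding_def)

lemma flen: "a \<in> VM \<Longrightarrow> length (f a) = length ns"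
  using fL lattice_V_len by blast

lemma dist: "a \<in> VM \<Longrightarrow> b \<in> VM \<Longrightarrow> gdist VM EM a b = l1 (f a) (f b)"
  using emb fL gdist_lattice by (metis isometric_embedding_def)

lemma coord_step:
  assumes "{a, b} \<in> EM" "a \<in> VM" "b \<in> VM" "j < length ns"
  shows "f b ! j \<le> Suc (f a ! j)"
proof -
  have "walk VM EM [a, b]" using assms by (simp add: walk_Cons2)
  then have "gdist VM EM a b < 2" using gdist_le[of VM EM "[a,b]" a b] by simp
  then have "l1 (f a) (f b) \<le> 1" using dist assms by simp
  moreover have "ad (f a ! j) (f b ! j) \<le> l1 (f a) (f b)"
    unfolding l1_def using assms flen by (intro member_le_sum) auto
  ultimately show ?thesis by (simp add: ad_def)
qed

definition Sv :: "'a \<Rightarrow> nat set" where "Sv v = {a \<in> VM. v \<in> X a}"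

lemma Sv_convex: "v \<in> V \<Longrightarrow> convex VM EM (Sv v)"
  using md by (simp add: median_decomp_def Sv_def)
lemma Sv_ne: "v \<in> V \<Longrightarrow> Sv v \<noteq> {}"
  using md by (simp add: median_decomp_def Sv_def)
lemma Sv_sub: "Sv v \<subseteq> VM" by (auto simp: Sv_def)

lemma coord_contig:
  assumes v: "v \<in> V" and j: "j < length ns"
  shows "contig ((\<lambda>a. f a ! j) ` Sv v)"
  unfolding contig_def
proof (intro ballI allI impI)
  fix t1 t2 t assume "t1 \<in> (\<lambda>a. f a ! j) ` Sv v" "t2 \<in> (\<lambda>a. f a ! j) ` Sv v" and t: "t1 \<le> t \<and> t \<le> t2"
  then obtain a1 a2 where a: "a1 \<in> Sv v" "a2 \<in> Sv v" "t1 = f a1 ! j" "t2 = f a2 ! j" by blast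
  have aV: "a1 \<in> VM" "a2 \<in> VM" using a Sv_sub by auto
  obtain xs where xs: "walk VM EM xs" "hd xs = a1" "last xs = a2" "length xs = Suc (gdist VM EM a1 a2)"
    using gdist_walk[OF conn aV] by blast
  have ne: "xs \<noteq> []" using xs by (auto simp: walk_def)
  define ys where "ys = map (\<lambda>a. f a ! j) xs"
  have st: "\<forall>k. Suc k < length ys \<longrightarrow> ys ! Suc k \<le> Suc (ys ! k)"
  proof (intro allI impI)
    fix k assume k: "Suc k < length ys"
    then have "{xs ! k, xs ! Suc k} \<in> EM" "xs ! k \<in> VM" "xs ! Suc k \<in> VM"
      using xs(1) unfolding walk_def ys_def by (auto simp: subset_iff)
    then show "ys ! Suc k \<le> Suc (ys ! k)" using coord_step j k unfolding ys_def by simp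
  qed
  have "t \<in> set ys" using ivt[OF _ st] ne t a xs unfolding ys_def by (simp add: hd_map last_map)
  then obtain a where a': "a \<in> set xs" "f a ! j = t" unfolding ys_def by auto
  have "a \<in> interval VM EM a1 a2" unfolding interval_def using xs a' by blast
  then have "a \<in> Sv v" using Sv_convex[OF v] a unfolding convex_def by blast
  then show "t \<in> (\<lambda>a. f a ! j) ` Sv v" using a' by blast
qed

lemma gate:
  assumes v: "v \<in> V" and a0: "a0 \<in> VM" and b: "b \<in> Sv v"
    and bmin: "\<forall>b'\<in>Sv v. gdist VM EM a0 b \<le> gdist VM EM a0 b'" and c: "c \<in> Sv v"
  shows "gdist VM EM a0 b + gdist VM EM b c = gdist VM EM a0 c"
proof -
  have bV: "b \<in> VM" and cV: "c \<in> VM" using b c Sv_sub by auto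
  have "card (interval VM EM a0 b \<inter> interval VM EM b c \<inter> interval VM EM c a0) = 1"
    using mg a0 bV cV unfolding median_graph_def by blast
  then obtain m where "m \<in> interval VM EM a0 b \<inter> interval VM EM b c \<inter> interval VM EM c a0"
    by (metis card_1_singletonE insertI1)
  then have m1: "m \<in> interval VM EM a0 b" and m2: "m \<in> interval VM EM b c"
    and m3: "m \<in> interval VM EM c a0" by auto
  have mS: "m \<in> Sv v" using m2 Sv_convex[OF v] b c unfolding convex_def by blast
  have mV: "m \<in> VM" and e1: "gdist VM EM a0 m + gdist VM EM m b = gdist VM EM a0 b"
    using m1 interval_iff[OF conn a0 bV] by auto
  have "gdist VM EM a0 b \<le> gdist VM EM a0 m" using bmin mS by blast
  then have "gdist VM EM m b = 0" using e1 by simp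
  then have "m = b" using gdist_0[OF conn mV bV] by simp
  then have "gdist VM EM c b + gdist VM EM b a0 = gdist VM EM c a0"
    using m3 interval_iff[OF conn cV a0] by auto
  then show ?thesis using gdist_sym[OF conn] a0 bV cV by simp
qed

lemma helly:
  assumes v: "v \<in> V" and a0: "a0 \<in> VM" and p: "length p = length ns"
    and amin: "\<forall>a\<in>VM. l1 (f a0) p \<le> l1 (f a) p"
    and cs: "\<forall>j<length ns. \<exists>c\<in>Sv v. f c ! j = p ! j"
  shows "a0 \<in> Sv v"
proof -
  obtain b where b: "b \<in> Sv v" and bmin: "\<forall>b'\<in>Sv v. gdist VM EM a0 b \<le> gdist VM EM a0 b'"
    using ex_has_least_nat[of "\<lambda>b. b \<in> Sv v" _ "gdist VM EM a0"] Sv_ne[OF v] by blast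
  have bV: "b \<in> VM" using b Sv_sub by auto
  have co: "ad (f a0 ! j) (f b ! j) + ad (f b ! j) (p ! j) = ad (f a0 ! j) (p ! j)"
    if j: "j < length ns" for j
  proof -
    obtain c where c: "c \<in> Sv v" "f c ! j = p ! j" using cs j by blast
    have cV: "c \<in> VM" using c Sv_sub by auto
    have "l1 (f a0) (f b) + l1 (f b) (f c) = l1 (f a0) (f c)"
      using gate[OF v a0 b bmin c(1)] dist a0 bV cV by simp
    then have "\<forall>j<length ns. ad (f a0 ! j) (f b ! j) + ad (f b ! j) (f c ! j) = ad (f a0 ! j) (f c ! j)"
      using l1_between[of "f a0" ns "f c" "f b"] flen a0 bV cV by simp
    then have "ad (f a0 ! j) (f b ! j) + ad (f b ! j) (f c ! j) = ad (f a0 ! j) (f c ! j)"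
      using j by blast
    then show ?thesis using c(2) by simp
  qed
  have le: "l1 (f b) p \<le> l1 (f a0) p"
    unfolding l1_def flen[OF a0] flen[OF bV]
  proof (rule sum_mono)
    fix j assume "j \<in> {..<length ns}"
    then show "ad (f b ! j) (p ! j) \<le> ad (f a0 ! j) (p ! j)" using co[of j] by simp
  qed
  then have eq: "l1 (f b) p = l1 (f a0) p" using amin bV by (simp add: le_antisym)
  have "ad (f b ! j) (p ! j) = ad (f a0 ! j) (p ! j)" if j: "j < length ns" for j
  proof (rule sum_mono_inv[of "\<lambda>j. ad (f b ! j) (p ! j)" "{..<length ns}" "\<lambda>j. ad (f a0 ! j) (p ! j)" j])
    show "(\<Sum>j<length ns. ad (f b ! j) (p ! j)) = (\<Sum>j<length ns. ad (f a0 ! j) (p ! j))"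
      using eq unfolding l1_def flen[OF a0] flen[OF bV] .
    fix i assume "i \<in> {..<length ns}"
    then show "ad (f b ! i) (p ! i) \<le> ad (f a0 ! i) (p ! i)" using co[of i] by simp
  qed (use j in auto)
  then have "\<forall>j<length ns. f a0 ! j = f b ! j" using co by fastforce
  then have "f a0 = f b" using flen[OF a0] flen[OF bV] by (simp add: nth_equalityI)
  then have "gdist VM EM a0 b = 0" using dist[OF a0 bV] l1_0 flen[OF a0] by simp
  then have "a0 = b" using gdist_0[OF conn a0 bV] by simp
  then show ?thesis using b by simp
qed

end



context dir2
begin

lemma width_ge: "a \<in> VM \<Longrightarrow> card (X a) \<le> width VM X"
  unfolding width_def using finVM by (intro Max_ge) auto

lemma finX: "a \<in> VM \<Longrightarrow> finite (X a)"
proof -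
  assume a: "a \<in> VM"
  have "X a \<subseteq> V" using md a by (simp add: median_decomp_def)
  moreover have "finite V" using gV by (simp add: graph_def)
  ultimately show "finite (X a)" by (rule finite_subset)
qed

lemma dir2_main:
  assumes i1: "1 \<le> i" and li: "length ns \<le> i"
  shows "\<exists>(n :: nat \<Rightarrow> nat) (Z :: nat \<Rightarrow> nat \<Rightarrow> 'a set). (\<forall>j<i. path_decomp V E (n j) (Z j)) \<and>
     Max {card (\<Inter>j\<in>{..<i}. Z j (u j)) | u. \<forall>j<i. u j < n j} \<le> width VM X"
proof -
  define k where "k = length ns"
  define nn where "nn j = (if j < k then ns ! j else 1)" for j
  define ZZ where "ZZ j t = (if j < k then \<Union>{X a | a. a \<in> VM \<and> f a ! j = t} else V)" for j t
  have Xsub: "a \<in> VM \<Longrightarrow> X a \<subseteq> V" for a using md by (simp add: median_decomp_def)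
  have Ecov: "e \<in> E \<Longrightarrow> \<exists>a\<in>VM. e \<subseteq> X a" for e using md by (simp add: median_decomp_def)
  have coordlt: "a \<in> VM \<Longrightarrow> j < k \<Longrightarrow> f a ! j < ns ! j" for a j
    using fL unfolding lattice_V_def k_def by auto
  obtain a1 where a1: "a1 \<in> VM" using VMne by blast
  have pd: "path_decomp V E (nn j) (ZZ j)" if j: "j < i" for j
  proof (cases "j < k")
    case True
    have T: "{u \<in> path_V (nn j). v \<in> ZZ j u} = (\<lambda>a. f a ! j) ` Sv v" for v
      using True coordlt unfolding nn_def ZZ_def Sv_def path_V_def by auto
    show ?thesis unfolding path_decomp_def
    proof (intro conjI ballI)
      show "1 \<le> nn j" using coordlt[OF a1 True] True unfolding nn_def by simp
    next
      fix u assume "u \<in> path_V (nn j)" then show "ZZ j u \<subseteq> V" using True Xsub unfolding ZZ_def by auto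
    next
      fix e assume "e \<in> E"
      then obtain a where a: "a \<in> VM" "e \<subseteq> X a" using Ecov by blast
      then have "f a ! j \<in> path_V (nn j)" "e \<subseteq> ZZ j (f a ! j)"
        using coordlt[OF a(1) True] True unfolding nn_def ZZ_def path_V_def by auto
      then show "\<exists>u\<in>path_V (nn j). e \<subseteq> ZZ j u" by blast
    next
      fix v assume v: "v \<in> V"
      have "connected_graph ((\<lambda>a. f a ! j) ` Sv v) {e \<in> path_E (nn j). e \<subseteq> (\<lambda>a. f a ! j) ` Sv v}"
      proof (rule path_conn)
        show "(\<lambda>a. f a ! j) ` Sv v \<subseteq> {..<nn j}" using coordlt True Sv_sub unfolding nn_def by auto
        show "(\<lambda>a. f a ! j) ` Sv v \<noteq> {}" using Sv_ne[OF v] by simp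
        show "contig ((\<lambda>a. f a ! j) ` Sv v)" using coord_contig[OF v] True k_def by simp
      qed
      then show "connected_graph {u \<in> path_V (nn j). v \<in> ZZ j u}
          {e \<in> path_E (nn j). e \<subseteq> {u \<in> path_V (nn j). v \<in> ZZ j u}}" unfolding T .
    qed
  next
    case False
    have T: "{u \<in> path_V (nn j). v \<in> ZZ j u} = {0}" if "v \<in> V" for v
      using False that unfolding nn_def ZZ_def path_V_def by auto
    show ?thesis unfolding path_decomp_def
    proof (intro conjI ballI)
      show "1 \<le> nn j" using False unfolding nn_def by simp
    next
      fix u assume "u \<in> path_V (nn j)" then show "ZZ j u \<subseteq> V" using False unfolding ZZ_def by auto
    next
      fix e assume "e \<in> E"
      then have "e \<subseteq> V" using gV unfolding graph_def by auto
      then show "\<exists>u\<in>path_V (nn j). e \<subseteq> ZZ j u" using False unfolding ZZ_def nn_def path_V_def by auto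
    next
      fix v assume v: "v \<in> V"
      have "connected_graph {0::nat} {e \<in> path_E (nn j). e \<subseteq> {0}}"
        by (rule path_conn) (auto simp: nn_def contig_def False)
      then show "connected_graph {u \<in> path_V (nn j). v \<in> ZZ j u}
          {e \<in> path_E (nn j). e \<subseteq> {u \<in> path_V (nn j). v \<in> ZZ j u}}" unfolding T[OF v] .
    qed
  qed
  define A where "A = {card (\<Inter>j\<in>{..<i}. ZZ j (u j)) | u. \<forall>j<i. u j < nn j}"
  have bound: "x \<le> width VM X" if "x \<in> A" for x
  proof -
    obtain u where u: "\<forall>j<i. u j < nn j" "x = card (\<Inter>j\<in>{..<i}. ZZ j (u j))"
      using \<open>x \<in> A\<close> unfolding A_def by blast
    define p where "p = map u [0..<k]"
    have plen: "length p = length ns" unfolding p_def k_def by simp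
    obtain a0 where a0: "a0 \<in> VM" and amin: "\<forall>a\<in>VM. l1 (f a0) p \<le> l1 (f a) p"
      using ex_has_least_nat[of "\<lambda>a. a \<in> VM" a1 "\<lambda>a. l1 (f a) p"] a1 by blast
    have sub: "(\<Inter>j\<in>{..<i}. ZZ j (u j)) \<subseteq> X a0"
    proof
      fix v assume v: "v \<in> (\<Inter>j\<in>{..<i}. ZZ j (u j))"
      then have v0: "v \<in> ZZ 0 (u 0)" using i1 by auto
      have vV: "v \<in> V"
        using v0 Xsub unfolding ZZ_def by (auto split: if_splits)
      have cs: "\<forall>j<length ns. \<exists>c\<in>Sv v. f c ! j = p ! j"
      proof (intro allI impI)
        fix j assume j: "j < length ns"
        then have "v \<in> ZZ j (u j)" using v li by auto
        then obtain c where "c \<in> VM" "f c ! j = u j" "v \<in> X c" using j unfolding ZZ_def k_def by auto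
        then show "\<exists>c\<in>Sv v. f c ! j = p ! j" using j unfolding Sv_def p_def k_def by auto
      qed
      have "a0 \<in> Sv v" by (rule helly[OF vV a0 plen amin cs])
      then show "v \<in> X a0" by (simp add: Sv_def)
    qed
    have "x \<le> card (X a0)" using u(2) card_mono[OF finX[OF a0] sub] by simp
    also have "\<dots> \<le> width VM X" by (rule width_ge[OF a0])
    finally show ?thesis .
  qed
  have Ane: "A \<noteq> {}"
  proof -
    have z: "\<forall>j<i. (\<lambda>_. 0::nat) j < nn j"
    proof (intro allI impI)
      fix j assume "j < i"
      show "(\<lambda>_. 0::nat) j < nn j"
      proof (cases "j < k")
        case True then show ?thesis using coordlt[OF a1 True] by (simp add: nn_def)
      next
        case False then show ?thesis by (simp add: nn_def)
      qed
    qed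
    have "card (\<Inter>j\<in>{..<i}. ZZ j ((\<lambda>_. 0::nat) j)) \<in> A"
      unfolding A_def mem_Collect_eq by (rule exI[of _ "\<lambda>_. 0"]) (use z in simp)
    then show ?thesis by blast
  qed
  have Afin: "finite A" using bound by (meson finite_atMost finite_subset atMost_iff subsetI)
  have "Max A \<le> width VM X" using Afin Ane bound by simp
  then show ?thesis using pd unfolding A_def by blast
qed

end



lemma dir1:
  fixes V :: "'a set" and E :: "'a set set" and n :: "nat \<Rightarrow> nat" and Z :: "nat \<Rightarrow> nat \<Rightarrow> 'a set"
  assumes gV: "graph V E" and i1: "1 \<le> i" and pd: "\<forall>j<i. path_decomp V E (n j) (Z j)"
  shows "\<exists>(VM :: nat set) EM X. median_decomp V E VM EM X \<and> lattice_dim_le VM EM i \<and>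
           width VM X = Max {card (\<Inter>j\<in>{..<i}. Z j (u j)) | u. \<forall>j<i. u j < n j}"
proof -
  define ns where "ns = map n [0..<i]"
  define L where "L = lattice_V ns"
  define EL where "EL = lattice_E ns"
  have lens: "length ns = i" by (simp add: ns_def)
  have nsj: "j < i \<Longrightarrow> ns ! j = n j" for j by (simp add: ns_def)
  have n1: "j < i \<Longrightarrow> 1 \<le> n j" for j using pd by (simp add: path_decomp_def)
  have inL: "x \<in> L \<longleftrightarrow> length x = i \<and> (\<forall>j<i. x ! j < n j)" for x
    unfolding L_def lattice_V_def using lens nsj by auto
  have Lne: "L \<noteq> {}" using inL[of "replicate i 0"] n1 by (auto simp: Suc_le_eq)
  have finL: "finite L" unfolding L_def by (rule finite_lattice_V)
  obtain g :: "nat list \<Rightarrow> nat" and N where g: "g ` L = {i. i < N}" "inj_on g L"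
    using finite_imp_inj_to_nat_seg[OF finL] by blast
  interpret T: transfer L EL g
    by unfold_locales (use g graph_lattice in \<open>auto simp: L_def EL_def\<close>)
  define VM where "VM = g ` L"
  define EM where "EM = (\<lambda>e. g ` e) ` EL"
  define X' where "X' x = (\<Inter>j\<in>{..<i}. Z j (x ! j))" for x
  define X where "X a = X' (inv_into L g a)" for a
  have Xg: "x \<in> L \<Longrightarrow> X (g x) = X' x" for x unfolding X_def using g(2) by simp
  have bagV: "\<And>j t. j < i \<Longrightarrow> t < n j \<Longrightarrow> Z j t \<subseteq> V"
    using pd unfolding path_decomp_def path_V_def by auto
  have T_def_conn: "\<And>j v. j < i \<Longrightarrow> v \<in> V \<Longrightarrow>
      connected_graph {t \<in> path_V (n j). v \<in> Z j t} {e \<in> path_E (n j). e \<subseteq> {t \<in> path_V (n j). v \<in> Z j t}}"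
    using pd unfolding path_decomp_def by blast
  have medM: "median_graph VM EM"
    unfolding VM_def EM_def by (rule T.median_tr) (use Lne median_lattice in \<open>simp add: L_def EL_def\<close>)
  have md: "median_decomp V E VM EM X"
    unfolding median_decomp_def
  proof (intro conjI ballI)
    show "median_graph VM EM" by (rule medM)
  next
    fix a assume "a \<in> VM"
    then obtain x where x: "x \<in> L" "a = g x" unfolding VM_def by blast
    have "X' x \<subseteq> Z 0 (x ! 0)" unfolding X'_def using i1 by auto
    also have "\<dots> \<subseteq> V" using bagV[of 0 "x ! 0"] x inL i1 by simp
    finally show "X a \<subseteq> V" using Xg x by simp
  next
    fix e assume e: "e \<in> E"
    define t where "t j = (SOME t. t < n j \<and> e \<subseteq> Z j t)" for j
    have t: "t j < n j \<and> e \<subseteq> Z j (t j)" if "j < i" for j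
    proof -
      have "\<exists>u\<in>path_V (n j). e \<subseteq> Z j u" using pd that e unfolding path_decomp_def by blast
      then have "\<exists>t. t < n j \<and> e \<subseteq> Z j t" unfolding path_V_def by auto
      then show ?thesis unfolding t_def by (rule someI_ex)
    qed
    define x where "x = map t [0..<i]"
    have xL: "x \<in> L" using inL t unfolding x_def by simp
    have "e \<subseteq> X' x" unfolding X'_def x_def using t by auto
    then show "\<exists>a\<in>VM. e \<subseteq> X a" using xL Xg unfolding VM_def by blast
  next
    fix v assume v: "v \<in> V"
    define S' where "S' = {x \<in> L. v \<in> X' x}"
    have S: "{a \<in> VM. v \<in> X a} = g ` S'" unfolding S'_def VM_def using Xg by auto
    define t where "t j = (SOME t. t < n j \<and> v \<in> Z j t)" for j
    have t: "t j < n j \<and> v \<in> Z j (t j)" if "j < i" for j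
    proof -
      have "{t \<in> path_V (n j). v \<in> Z j t} \<noteq> {}"
        using T_def_conn[OF that v] unfolding connected_graph_def by blast
      then have "\<exists>t. t < n j \<and> v \<in> Z j t" unfolding path_V_def by auto
      then show ?thesis unfolding t_def by (rule someI_ex)
    qed
    have "map t [0..<i] \<in> S'" unfolding S'_def X'_def using inL t by simp
    then show "{a \<in> VM. v \<in> X a} \<noteq> {}" unfolding S by blast
    have cS': "convex L EL S'" unfolding convex_def
    proof (intro conjI ballI)
      show "S' \<subseteq> L" unfolding S'_def by blast
    next
      fix x y assume xy: "x \<in> S'" "y \<in> S'"
      have xyL: "x \<in> lattice_V ns" "y \<in> lattice_V ns" using xy unfolding S'_def L_def by auto
      show "interval L EL x y \<subseteq> S'"
      proof
        fix w assume "w \<in> interval L EL x y"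
        then have w: "w \<in> L" "\<forall>j<i. min (x!j) (y!j) \<le> w!j \<and> w!j \<le> max (x!j) (y!j)"
          using interval_lattice[OF xyL] lens unfolding L_def EL_def by auto
        have "v \<in> Z j (w ! j)" if j: "j < i" for j
        proof -
          define Tj where "Tj = {t \<in> path_V (n j). v \<in> Z j t}"
          have c: "contig Tj" unfolding Tj_def by (rule conn_contig[OF T_def_conn[OF j v]])
          have xyT: "x ! j \<in> Tj" "y ! j \<in> Tj"
            using xy j inL w unfolding Tj_def S'_def X'_def path_V_def by auto
          have mm: "min (x!j) (y!j) \<in> Tj" "max (x!j) (y!j) \<in> Tj"
            using xyT by (simp_all add: min_def max_def)
          have "min (x!j) (y!j) \<le> w!j \<and> w!j \<le> max (x!j) (y!j)" using w(2) j by blast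
          then have "w ! j \<in> Tj" using c mm unfolding contig_def by blast
          then show ?thesis unfolding Tj_def by simp
        qed
        then show "w \<in> S'" unfolding S'_def X'_def using w by simp
      qed
    qed
    have cc: "convex VM EM (g ` S')" unfolding VM_def EM_def
      by (rule T.convex_tr) (use cS' in \<open>auto simp: S'_def\<close>)
    show "convex VM EM {a \<in> VM. v \<in> X a}" using cc S by simp
  qed
  have ld: "lattice_dim_le VM EM i"
    unfolding lattice_dim_le_def
  proof (intro exI conjI)
    show "length ns \<le> i" by (simp add: lens)
    show "\<forall>j<length ns. 1 \<le> ns ! j" using n1 nsj lens by simp
    show "isometric_embedding VM EM (lattice_V ns) (lattice_E ns) (inv_into L g)"
      unfolding isometric_embedding_def
    proof (intro conjI ballI)
      show "inv_into L g ` VM \<subseteq> lattice_V ns" unfolding VM_def L_def using g(2)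
        by (auto simp: L_def)
    next
      fix a b assume "a \<in> VM" "b \<in> VM"
      then obtain x y where xy: "x \<in> L" "y \<in> L" "a = g x" "b = g y" unfolding VM_def by blast
      show "gdist (lattice_V ns) (lattice_E ns) (inv_into L g a) (inv_into L g b) = gdist VM EM a b"
        using T.gdist_tr[OF xy(1,2)] xy g(2) unfolding VM_def EM_def L_def EL_def by simp
    qed
  qed
  have W: "(\<lambda>a. card (X a)) ` VM = {card (\<Inter>j\<in>{..<i}. Z j (u j)) | u. \<forall>j<i. u j < n j}"
  proof (intro equalityI subsetI)
    fix c assume "c \<in> (\<lambda>a. card (X a)) ` VM"
    then obtain x where x: "x \<in> L" "c = card (X' x)" unfolding VM_def using Xg by auto
    then show "c \<in> {card (\<Inter>j\<in>{..<i}. Z j (u j)) | u. \<forall>j<i. u j < n j}"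
      unfolding X'_def using inL by (intro CollectI exI[of _ "\<lambda>j. x ! j"]) auto
  next
    fix c assume "c \<in> {card (\<Inter>j\<in>{..<i}. Z j (u j)) | u. \<forall>j<i. u j < n j}"
    then obtain u where u: "\<forall>j<i. u j < n j" "c = card (\<Inter>j\<in>{..<i}. Z j (u j))" by blast
    have xL: "map u [0..<i] \<in> L" using inL u by simp
    have "X' (map u [0..<i]) = (\<Inter>j\<in>{..<i}. Z j (u j))" unfolding X'_def by simp
    then have "c = card (X (g (map u [0..<i])))" using Xg[OF xL] u(2) by simp
    then show "c \<in> (\<lambda>a. card (X a)) ` VM" using xL unfolding VM_def by blast
  qed
  have wd: "width VM X = Max {card (\<Inter>j\<in>{..<i}. Z j (u j)) | u. \<forall>j<i. u j < n j}"
    unfolding width_def using W by simp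
  show ?thesis using md ld wd by blast
qed



lemma pd_trivial:
  assumes gV: "graph V E"
  shows "path_decomp V E 1 (\<lambda>_. V)"
  unfolding path_decomp_def
proof (intro conjI ballI)
  fix e assume "e \<in> E"
  then have "e \<subseteq> V" using gV unfolding graph_def by auto
  then show "\<exists>u\<in>path_V 1. e \<subseteq> V" by (auto simp: path_V_def)
next
  fix v assume v: "v \<in> V"
  have T: "{u \<in> path_V 1. v \<in> V} = {0::nat}" using v by (auto simp: path_V_def)
  have "connected_graph {0::nat} {e \<in> path_E 1. e \<subseteq> {0}}"
    by (rule path_conn) (auto simp: contig_def)
  then show "connected_graph {u \<in> path_V 1. v \<in> V} {e \<in> path_E 1. e \<subseteq> {u \<in> path_V 1. v \<in> V}}"
    unfolding T .
qed auto

theorem mainTheorem4: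
  fixes V :: "'a set" and E :: "'a set set" and i :: nat
  assumes "graph V E" and "i \<ge> 1"
  shows "latticewidth i V E =
    (LEAST w. \<exists>(n :: nat \<Rightarrow> nat) (Z :: nat \<Rightarrow> nat \<Rightarrow> 'a set).
       (\<forall>j<i. path_decomp V E (n j) (Z j)) \<and>
       Max {card (\<Inter>j\<in>{..<i}. Z j (u j)) | u. \<forall>j<i. u j < n j} = w)"
proof -
  define PL where "PL w = (\<exists>(VM :: nat set) EM X.
      median_decomp V E VM EM X \<and> lattice_dim_le VM EM i \<and> width VM X = w)" for w
  define PR where "PR w = (\<exists>(n :: nat \<Rightarrow> nat) (Z :: nat \<Rightarrow> nat \<Rightarrow> 'a set).
       (\<forall>j<i. path_decomp V E (n j) (Z j)) \<and>
       Max {card (\<Inter>j\<in>{..<i}. Z j (u j)) | u. \<forall>j<i. u j < n j} = w)" for w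
  have L: "latticewidth i V E = Least PL" unfolding latticewidth_def PL_def by simp
  have R: "(LEAST w. \<exists>(n :: nat \<Rightarrow> nat) (Z :: nat \<Rightarrow> nat \<Rightarrow> 'a set).
       (\<forall>j<i. path_decomp V E (n j) (Z j)) \<and>
       Max {card (\<Inter>j\<in>{..<i}. Z j (u j)) | u. \<forall>j<i. u j < n j} = w) = Least PR"
    unfolding PR_def by simp
  have r1: "PL w" if hPR: "PR w" for w
  proof -
    obtain n :: "nat \<Rightarrow> nat" and Z :: "nat \<Rightarrow> nat \<Rightarrow> 'a set" where
      nz: "\<forall>j<i. path_decomp V E (n j) (Z j)"
         "Max {card (\<Inter>j\<in>{..<i}. Z j (u j)) | u. \<forall>j<i. u j < n j} = w"
      using hPR unfolding PR_def by blast
    show ?thesis using dir1[OF assms(1) assms(2) nz(1)] nz(2) unfolding PL_def by simp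
  qed
  have r2: "\<exists>w'\<le>w. PR w'" if hPL: "PL w" for w
  proof -
    obtain VM :: "nat set" and EM X where m: "median_decomp V E VM EM X" "lattice_dim_le VM EM i"
      "width VM X = w" using hPL unfolding PL_def by blast
    obtain ns f where nf: "length ns \<le> i"
      "isometric_embedding VM EM (lattice_V ns) (lattice_E ns) f"
      using m(2) unfolding lattice_dim_le_def by blast
    interpret d: dir2 V E VM EM X ns f
      by unfold_locales (use assms(1) m(1) nf(2) in auto)
    obtain n :: "nat \<Rightarrow> nat" and Z :: "nat \<Rightarrow> nat \<Rightarrow> 'a set" where
      nz: "\<forall>j<i. path_decomp V E (n j) (Z j)"
         "Max {card (\<Inter>j\<in>{..<i}. Z j (u j)) | u. \<forall>j<i. u j < n j} \<le> width VM X"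
      using d.dir2_main[OF assms(2) nf(1)] by blast
    have "PR (Max {card (\<Inter>j\<in>{..<i}. Z j (u j)) | u. \<forall>j<i. u j < n j})"
      unfolding PR_def using nz(1) by blast
    then show ?thesis using nz(2) m(3) by blast
  qed
  define n0 :: "nat \<Rightarrow> nat" where "n0 = (\<lambda>_. 1)"
  define Z0 :: "nat \<Rightarrow> nat \<Rightarrow> 'a set" where "Z0 = (\<lambda>_ _. V)"
  have "\<forall>j<i. path_decomp V E (n0 j) (Z0 j)" using pd_trivial[OF assms(1)] by (simp add: n0_def Z0_def)
  then have "PR (Max {card (\<Inter>j\<in>{..<i}. Z0 j (u j)) | u. \<forall>j<i. u j < n0 j})"
    unfolding PR_def by blast
  then have PR1: "PR (Least PR)" by (rule LeastI)
  then have "PL (Least PR)" by (rule r1)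
  then have le1: "Least PL \<le> Least PR" by (rule Least_le)
  have "PL (Least PL)" using \<open>PL (Least PR)\<close> by (rule LeastI)
  then obtain w' where "w' \<le> Least PL" "PR w'" using r2 by blast
  then have "Least PR \<le> Least PL" using Least_le[of PR w'] by simp
  then show ?thesis using L R le1 by simp
qed


end
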